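(* Let $\vec p,\vec s$ be $n$-tuples with entries in $[1,\infty]$, $1\le\alpha\le\infty$, with $\frac1n\sum_{i=1}^n\frac1{s_i}\le\frac1\alpha\le\frac1n\sum_{i=1}^n\frac1{p_i}$. For every constant $\rho\in(0,\infty)$ there exist constants $0<c\le C$ (independent of $f$ and $r$) such that for all $f\in L^1_{loc}(\mathbb R^n)$ and all $r>0$, $$c\,\big\|\,\|f\chi_{B(\cdot,\rho r)}\|_{L^{\vec p}}\big\|_{L^{\vec s}}\le\big\|\,\|f\chi_{B(\cdot,r)}\|_{L^{\vec p}}\big\|_{L^{\vec s}}\le C\,\big\|\,\|f\chi_{B(\cdot,\rho r)}\|_{L^{\vec p}}\big\|_{L^{\vec s}}.$$
   Context: For $\vec p=(p_1,\dots,p_n)$ with $1\le p_i\le\infty$, $\|f\|_{L^{\vec p}}=\Big(\int_{\mathbb R}\cdots\Big(\int_{\mathbb R}|f(x)|^{p_1}\,dx_1\Big)^{p_2/p_1}\cdots dx_n\Big)^{1/p_n}$ (usual modification when some $p_i=\infty$). $B(y,r)$ is the open ball of center $y$ and radius $r$, $\chi_E$ the characteristic function of $E$; $\big\|\,\|f\chi_{B(\cdot,r)}\|_{L^{\vec p}}\big\|_{L^{\vec s}}$ denotes the $L^{\vec s}$-norm of the function $y\mapsto\|f\chi_{B(y,r)}\|_{L^{\vec p}}$. *)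

theory Defs
  imports "HOL-Analysis.Analysis"
begin

(* Points of R^n are represented as functions x :: nat => real; only the
   coordinates x 0, ..., x (n-1) matter.  Following HOL-Analysis's PiM
   convention, the canonical representatives have value "undefined" outside
   {..<n} (the base point below). *)

definition epow :: "ennreal \<Rightarrow> real \<Rightarrow> ennreal" where
  "epow v e = (if v = \<infinity> then \<infinity> else ennreal (enn2real v powr e))"

definition ess_sup_real :: "(real \<Rightarrow> ennreal) \<Rightarrow> ennreal" where
  "ess_sup_real g = Inf {z. AE t in lborel. g t \<le> z}"

definition Lp1 :: "ennreal \<Rightarrow> (real \<Rightarrow> ennreal) \<Rightarrow> ennreal" where
  "Lp1 p g = (if p = \<infinity> then ess_sup_real g
              else epow (\<integral>\<^sup>+ t. epow (g t) (enn2real p) \<partial>lborel) (1 / enn2real p))"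

(* mixed_partial p k f x (f nonnegative, possibly \<infinity>-valued): the mixed norm in the first k coordinates
   x_1,...,x_k (indices 0..k-1), innermost x_1 with exponent p 0,
   the remaining coordinates of x being kept fixed *)
primrec mixed_partial ::
  "(nat \<Rightarrow> ennreal) \<Rightarrow> nat \<Rightarrow> ((nat \<Rightarrow> real) \<Rightarrow> ennreal) \<Rightarrow> (nat \<Rightarrow> real) \<Rightarrow> ennreal" where
  "mixed_partial p 0 f x = f x"
| "mixed_partial p (Suc k) f x = Lp1 (p k) (\<lambda>t. mixed_partial p k f (x(k := t)))"

definition mixed_norm :: "nat \<Rightarrow> (nat \<Rightarrow> ennreal) \<Rightarrow> ((nat \<Rightarrow> real) \<Rightarrow> real) \<Rightarrow> ennreal" where
  "mixed_norm n p f = mixed_partial p n (\<lambda>x. ennreal \<bar>f x\<bar>) (\<lambda>_. undefined)"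

definition dist_n :: "nat \<Rightarrow> (nat \<Rightarrow> real) \<Rightarrow> (nat \<Rightarrow> real) \<Rightarrow> real" where
  "dist_n n x y = sqrt (\<Sum>i<n. (x i - y i)\<^sup>2)"

definition ball_n :: "nat \<Rightarrow> (nat \<Rightarrow> real) \<Rightarrow> real \<Rightarrow> (nat \<Rightarrow> real) set" where
  "ball_n n y r = {x. dist_n n x y < r}"

abbreviation lebesgue_n :: "nat \<Rightarrow> (nat \<Rightarrow> real) measure" where
  "lebesgue_n n \<equiv> PiM {..<n} (\<lambda>_. lborel)"

definition locally_integrable_n :: "nat \<Rightarrow> ((nat \<Rightarrow> real) \<Rightarrow> real) \<Rightarrow> bool" where
  "locally_integrable_n n f \<longleftrightarrow> f \<in> borel_measurable (lebesgue_n n) \<and>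
     (\<forall>y R. set_integrable (lebesgue_n n) (space (lebesgue_n n) \<inter> ball_n n y R) f)"

definition amalgam_norm ::
  "nat \<Rightarrow> (nat \<Rightarrow> ennreal) \<Rightarrow> (nat \<Rightarrow> ennreal) \<Rightarrow> real \<Rightarrow> ((nat \<Rightarrow> real) \<Rightarrow> real) \<Rightarrow> ennreal" where
  "amalgam_norm n p s r f =
     mixed_partial s n
       (\<lambda>y. (mixed_norm n p (\<lambda>x. f x * indicator (ball_n n y r) x))) (\<lambda>_. undefined)"

end

theory Submission
  imports Defs "HOL-Probability.Essential_Supremum"
begin

lemma real_pow_add_le:
  fixes x y e :: real assumes "0 \<le> x" "0 \<le> y" "0 \<le> e"
  shows "(x + y) powr e \<le> 2 powr e * (x powr e + y powr e)"
proof -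
  have "(x + y) powr e \<le> (2 * max x y) powr e"
    using assms by (intro powr_mono2) auto
  also have "\<dots> = 2 powr e * (max x y) powr e" using assms by (simp add: powr_mult)
  also have "(max x y) powr e \<le> x powr e + y powr e"
    by (cases "x \<le> y") (auto simp: max_def)
  finally show ?thesis by (simp add: mult_left_mono)
qed

lemma epow_mono: assumes "a \<le> b" "0 \<le> e" shows "epow a e \<le> epow b e"
proof (cases "b = \<infinity>")
  case True then show ?thesis by (simp add: epow_def)
next
  case False
  then have "a \<noteq> \<infinity>" using assms top.extremum_unique by fastforce
  then show ?thesis using False assms
    by (auto simp: epow_def intro!: ennreal_leI powr_mono2 enn2real_mono simp: less_top)
qed

lemma epow_add: assumes "0 \<le> e"
  shows "epow (a + b) e \<le> ennreal (2 powr e) * (epow a e + epow b e)"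
proof (cases "a = \<infinity> \<or> b = \<infinity>")
  case True then show ?thesis by (auto simp: epow_def ennreal_mult_top)
next
  case False
  then obtain x y where xy: "a = ennreal x" "b = ennreal y" "0 \<le> x" "0 \<le> y"
    by (cases a; cases b) auto
  then show ?thesis using assms real_pow_add_le[of x y e]
    by (simp add: epow_def ennreal_plus[symmetric] ennreal_mult[symmetric] del: ennreal_plus)
qed

lemma epow_cmult: assumes "0 < c" "0 \<le> e"
  shows "epow (ennreal c * a) e = ennreal (c powr e) * epow a e"
proof (cases "a = \<infinity>")
  case True then show ?thesis using assms by (simp add: epow_def ennreal_mult_top)
next
  case False
  then obtain x where xy: "a = ennreal x" "0 \<le> x"
    by (cases a) auto
  then show ?thesis using assms
    by (simp add: epow_def ennreal_mult[symmetric] powr_mult enn2real_mult)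
qed

lemma ess_sup_real_eq: "g \<in> borel_measurable lborel \<Longrightarrow> ess_sup_real g = esssup lborel g"
  by (simp add: ess_sup_real_def esssup_eq_AE)

lemma ess_sup_real_AE: "g \<in> borel_measurable lborel \<Longrightarrow> AE t in lborel. g t \<le> ess_sup_real g"
  using esssup_AE[of g lborel] by (simp add: ess_sup_real_eq)

lemma ess_sup_real_le: "AE t in lborel. g t \<le> z \<Longrightarrow> ess_sup_real g \<le> z"
  unfolding ess_sup_real_def by (rule Inf_lower) simp

lemma ess_sup_real_mono: "(\<And>t. g t \<le> h t) \<Longrightarrow> ess_sup_real g \<le> ess_sup_real h"
  unfolding ess_sup_real_def
  by (rule Inf_superset_mono) (auto elim: eventually_mono intro: order_trans)

lemma enn2real_ge1: "1 \<le> q \<Longrightarrow> q \<noteq> \<infinity> \<Longrightarrow> 1 \<le> enn2real q"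
proof -
  assume a: "1 \<le> q" "q \<noteq> \<infinity>"
  have "enn2real 1 \<le> enn2real q" using a by (intro enn2real_mono) (auto simp: less_top)
  then show ?thesis by simp
qed

lemma Lp1_mono: assumes "\<And>t. g t \<le> h t" "1 \<le> q" shows "Lp1 q g \<le> Lp1 q h"
proof (cases "q = \<infinity>")
  case True then show ?thesis using assms by (simp add: Lp1_def ess_sup_real_mono)
next
  case False
  have "0 < enn2real q" using assms False enn2real_ge1[of q] by linarith
  then show ?thesis using False assms
    by (auto simp: Lp1_def intro!: epow_mono nn_integral_mono)
qed

lemma measurable_epow[measurable]:
  assumes [measurable]: "f \<in> borel_measurable M"
  shows "(\<lambda>x. epow (f x) e) \<in> borel_measurable M"
  unfolding epow_def by measurable

lemma Lp1_scale:
  assumes g[measurable]: "g \<in> borel_measurable lborel" and "1 \<le> q" "0 < c"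
  shows "Lp1 q (\<lambda>t. ennreal c * g t) \<le> ennreal c * Lp1 q g"
proof (cases "q = \<infinity>")
  case True
  have "AE t in lborel. ennreal c * g t \<le> ennreal c * ess_sup_real g"
    using ess_sup_real_AE[OF g] by (auto elim!: eventually_mono intro: mult_left_mono)
  then show ?thesis using True by (simp add: Lp1_def ess_sup_real_le)
next
  case False
  define Q where "Q = enn2real q"
  have Q: "1 \<le> Q" using enn2real_ge1[OF assms(2) False] Q_def by simp
  have "(\<integral>\<^sup>+ t. epow (ennreal c * g t) Q \<partial>lborel) = (\<integral>\<^sup>+ t. ennreal (c powr Q) * epow (g t) Q \<partial>lborel)"
    using Q assms by (simp add: epow_cmult)
  also have "\<dots> = ennreal (c powr Q) * (\<integral>\<^sup>+ t. epow (g t) Q \<partial>lborel)"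
    by (rule nn_integral_cmult) measurable
  finally have "Lp1 q (\<lambda>t. ennreal c * g t) = epow (ennreal (c powr Q) * (\<integral>\<^sup>+ t. epow (g t) Q \<partial>lborel)) (1/Q)"
    using False by (simp add: Lp1_def Q_def)
  also have "\<dots> = ennreal ((c powr Q) powr (1/Q)) * epow (\<integral>\<^sup>+ t. epow (g t) Q \<partial>lborel) (1/Q)"
    using Q assms by (intro epow_cmult) auto
  also have "(c powr Q) powr (1/Q) = c" using Q assms by (simp add: powr_powr)
  finally show ?thesis using False by (simp add: Lp1_def Q_def)
qed

lemma le_4_times: "(x::ennreal) \<le> 4 * x"
proof -
  have "1 * x \<le> 4 * x" by (intro mult_right_mono) auto
  then show ?thesis by simp
qed

lemma Lp1_add:
  assumes g[measurable]: "g \<in> borel_measurable lborel" and h[measurable]: "h \<in> borel_measurable lborel"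
    and "1 \<le> q"
  shows "Lp1 q (\<lambda>t. g t + h t) \<le> 4 * (Lp1 q g + Lp1 q h)"
proof (cases "q = \<infinity>")
  case True
  have "AE t in lborel. g t + h t \<le> ess_sup_real g + ess_sup_real h"
    using AE_conjI[OF ess_sup_real_AE[OF g] ess_sup_real_AE[OF h]]
    by (rule eventually_mono) (simp add: add_mono)
  then have "ess_sup_real (\<lambda>t. g t + h t) \<le> ess_sup_real g + ess_sup_real h"
    by (rule ess_sup_real_le)
  then have "ess_sup_real (\<lambda>t. g t + h t) \<le> 4 * (ess_sup_real g + ess_sup_real h)"
    using le_4_times order_trans by blast
  then show ?thesis using True by (simp add: Lp1_def)
next
  case False
  define Q where "Q = enn2real q"
  have Q: "1 \<le> Q" using enn2real_ge1[OF assms(3) False] Q_def by simp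
  define A where "A = (\<integral>\<^sup>+ t. epow (g t) Q \<partial>lborel)"
  define B where "B = (\<integral>\<^sup>+ t. epow (h t) Q \<partial>lborel)"
  have mg: "(\<lambda>t. epow (g t) Q) \<in> borel_measurable lborel" by (rule measurable_epow[OF g])
  have mh: "(\<lambda>t. epow (h t) Q) \<in> borel_measurable lborel" by (rule measurable_epow[OF h])
  have I1: "(\<integral>\<^sup>+ t. epow (g t + h t) Q \<partial>lborel) \<le> (\<integral>\<^sup>+ t. ennreal (2 powr Q) * (epow (g t) Q + epow (h t) Q) \<partial>lborel)"
    using Q by (intro nn_integral_mono epow_add) auto
  have I2: "(\<integral>\<^sup>+ t. ennreal (2 powr Q) * (epow (g t) Q + epow (h t) Q) \<partial>lborel)
      = ennreal (2 powr Q) * (\<integral>\<^sup>+ t. (epow (g t) Q + epow (h t) Q) \<partial>lborel)"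
    by (rule nn_integral_cmult) (rule borel_measurable_add[OF mg mh])
  have I3: "(\<integral>\<^sup>+ t. (epow (g t) Q + epow (h t) Q) \<partial>lborel) = A + B"
    unfolding A_def B_def by (rule nn_integral_add[OF mg mh])
  have I: "(\<integral>\<^sup>+ t. epow (g t + h t) Q \<partial>lborel) \<le> ennreal (2 powr Q) * (A + B)"
    using I1 I2 I3 by simp
  have "Lp1 q (\<lambda>t. g t + h t) = epow (\<integral>\<^sup>+ t. epow (g t + h t) Q \<partial>lborel) (1/Q)"
    using False by (simp add: Lp1_def Q_def)
  also have "\<dots> \<le> epow (ennreal (2 powr Q) * (A + B)) (1/Q)"
    using Q by (intro epow_mono I) auto
  also have "\<dots> = ennreal ((2 powr Q) powr (1/Q)) * epow (A + B) (1/Q)"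
    using Q by (intro epow_cmult) auto
  also have "(2 powr Q) powr (1/Q) = 2" using Q by (simp add: powr_powr)
  finally have L1: "Lp1 q (\<lambda>t. g t + h t) \<le> ennreal 2 * epow (A + B) (1/Q)" .
  have L2: "epow (A + B) (1/Q) \<le> ennreal (2 powr (1/Q)) * (epow A (1/Q) + epow B (1/Q))"
    using Q by (intro epow_add) auto
  have "2 powr (1/Q) \<le> 2 powr 1" using Q by (intro powr_mono) auto
  then have "ennreal (2 powr (1/Q)) \<le> ennreal 2" by (intro ennreal_leI) simp
  then have "ennreal (2 powr (1/Q)) * (epow A (1/Q) + epow B (1/Q)) \<le> ennreal 2 * (epow A (1/Q) + epow B (1/Q))"
    by (rule mult_right_mono) simp
  then have L3: "epow (A + B) (1/Q) \<le> ennreal 2 * (epow A (1/Q) + epow B (1/Q))"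
    using L2 by (rule order_trans[rotated])
  have "ennreal 2 * epow (A + B) (1/Q) \<le> ennreal 2 * (ennreal 2 * (epow A (1/Q) + epow B (1/Q)))"
    using L3 by (rule mult_left_mono) simp
  then have "Lp1 q (\<lambda>t. g t + h t) \<le> ennreal 2 * (ennreal 2 * (epow A (1/Q) + epow B (1/Q)))"
    using L1 by (rule order_trans[rotated])
  also have "ennreal 2 * (ennreal 2 * (epow A (1/Q) + epow B (1/Q))) = 4 * (epow A (1/Q) + epow B (1/Q))"
    by (simp only: ennreal_numeral mult.assoc[symmetric]) simp
  also have "epow A (1/Q) + epow B (1/Q) = Lp1 q g + Lp1 q h"
    using False by (simp add: Lp1_def Q_def A_def B_def)
  finally show ?thesis .
qed

lemma Lp1_shift:
  assumes g[measurable]: "g \<in> borel_measurable lborel" and "1 \<le> q"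
  shows "Lp1 q (\<lambda>t. g (t + a)) = Lp1 q g"
proof (cases "q = \<infinity>")
  case True
  have "(AE t in lborel. g t \<le> z) = (AE t in lborel. g (t + a) \<le> z)" for z
  proof -
    have "(AE t in lborel. g t \<le> z) = (AE t in distr lborel borel ((+) a). g t \<le> z)"
      by (subst lborel_distr_plus) (rule refl)
    also have "\<dots> = (AE t in lborel. g (a + t) \<le> z)"
      by (rule AE_distr_iff) measurable
    finally show ?thesis by (simp add: add.commute)
  qed
  then show ?thesis using True by (simp add: Lp1_def ess_sup_real_def)
next
  case False
  define Q where "Q = enn2real q"
  have "(\<integral>\<^sup>+ t. epow (g t) Q \<partial>lborel) = (\<integral>\<^sup>+ t. epow (g (t + a)) Q \<partial>lborel)"
    using nn_integral_real_affine[of "\<lambda>t. epow (g t) Q" 1 a] by (simp add: add.commute)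
  then show ?thesis using False by (simp add: Lp1_def Q_def)
qed

lemma Lp1_measurable:
  assumes gm[measurable]: "case_prod g \<in> borel_measurable (N \<Otimes>\<^sub>M lborel)" and "1 \<le> q"
  shows "(\<lambda>x. Lp1 q (g x)) \<in> borel_measurable N"
proof (cases "q = \<infinity>")
  case False
  define Q where "Q = enn2real q"
  have e: "case_prod (\<lambda>x t. epow (g x t) Q) = (\<lambda>z. epow (case_prod g z) Q)" by auto
  have "(\<lambda>x. \<integral>\<^sup>+t. epow (g x t) Q \<partial>lborel) \<in> borel_measurable N"
    by (rule lborel.borel_measurable_nn_integral) (unfold e, rule measurable_epow[OF gm])
  then have "(\<lambda>x. epow (\<integral>\<^sup>+t. epow (g x t) Q \<partial>lborel) (1 / Q)) \<in> borel_measurable N"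
    by (rule measurable_epow)
  moreover have "(\<lambda>x. Lp1 q (g x)) = (\<lambda>x. epow (\<integral>\<^sup>+t. epow (g x t) Q \<partial>lborel) (1 / Q))"
    using False by (simp add: Lp1_def Q_def fun_eq_iff)
  ultimately show ?thesis by (simp only:)
next
  case True
  have gx: "g x \<in> borel_measurable lborel" if "x \<in> space N" for x
    using measurable_Pair2[OF gm that] by simp
  define u where "u r x t = (if ennreal (real_of_rat r) < g x t then 1 else 0 :: ennreal)" for r x t
  have um: "case_prod (u r) \<in> borel_measurable (N \<Otimes>\<^sub>M lborel)" for r
  proof -
    have "case_prod (u r) = (\<lambda>z. if ennreal (real_of_rat r) < case_prod g z then 1 else 0)"
      by (auto simp: u_def fun_eq_iff)
    also have "\<dots> \<in> borel_measurable (N \<Otimes>\<^sub>M lborel)"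
      by (intro measurable_If measurable_const pred_intros_logic borel_measurable_less gm) auto
    finally show ?thesis .
  qed
  have S: "{x\<in>space N. AE t in lborel. g x t \<le> ennreal (real_of_rat r)} =
      {x\<in>space N. (\<integral>\<^sup>+t. u r x t \<partial>lborel) = 0}" for r
  proof -
    have "(AE t in lborel. g x t \<le> ennreal (real_of_rat r)) = ((\<integral>\<^sup>+t. u r x t \<partial>lborel) = 0)"
      if "x \<in> space N" for x
    proof -
      have "u r x \<in> borel_measurable lborel" using measurable_Pair2[OF um that] by simp
      then have "((\<integral>\<^sup>+t. u r x t \<partial>lborel) = 0) = (AE t in lborel. u r x t = 0)"
        by (rule nn_integral_0_iff_AE)
      also have "\<dots> = (AE t in lborel. g x t \<le> ennreal (real_of_rat r))"
        by (simp add: u_def not_less)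
      finally show ?thesis by simp
    qed
    then show ?thesis by auto
  qed
  have Sm: "{x\<in>space N. AE t in lborel. g x t \<le> ennreal (real_of_rat r)} \<in> sets N" for r
  proof -
    have "(\<lambda>x. \<integral>\<^sup>+t. u r x t \<partial>lborel) \<in> borel_measurable N"
      using um by (rule lborel.borel_measurable_nn_integral)
    then have "{x\<in>space N. (\<integral>\<^sup>+t. u r x t \<partial>lborel) = 0} \<in> sets N" by measurable
    then show ?thesis using S by simp
  qed
  have eq: "{x\<in>space N. Lp1 q (g x) < y} =
     (\<Union>r. {x\<in>space N. ennreal (real_of_rat r) < y} \<inter> {x\<in>space N. AE t in lborel. g x t \<le> ennreal (real_of_rat r)})" for y
  proof (intro set_eqI iffI)
    fix x assume x: "x \<in> {x\<in>space N. Lp1 q (g x) < y}"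
    then obtain r where r: "ess_sup_real (g x) < ennreal (real_of_rat r)" "ennreal (real_of_rat r) < y"
      using True ennreal_rat_dense[of "ess_sup_real (g x)" y] by (auto simp: Lp1_def)
    have "AE t in lborel. g x t \<le> ennreal (real_of_rat r)"
    proof -
      have "x \<in> space N" using x by simp
      from ess_sup_real_AE[OF gx[OF this]] show ?thesis
        by (rule eventually_mono) (meson order_trans less_imp_le r(1))
    qed
    then show "x \<in> (\<Union>r. {x\<in>space N. ennreal (real_of_rat r) < y} \<inter> {x\<in>space N. AE t in lborel. g x t \<le> ennreal (real_of_rat r)})"
      using r x by auto
  next
    fix x assume "x \<in> (\<Union>r. {x\<in>space N. ennreal (real_of_rat r) < y} \<inter> {x\<in>space N. AE t in lborel. g x t \<le> ennreal (real_of_rat r)})"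
    then obtain r where r: "x \<in> space N" "ennreal (real_of_rat r) < y" "AE t in lborel. g x t \<le> ennreal (real_of_rat r)"
      by auto
    have "ess_sup_real (g x) \<le> ennreal (real_of_rat r)" using r(3) by (rule ess_sup_real_le)
    then show "x \<in> {x\<in>space N. Lp1 q (g x) < y}" using r True by (auto simp: Lp1_def)
  qed
  show ?thesis
  proof (rule borel_measurableI_less)
    fix y :: ennreal
    show "{x\<in>space N. Lp1 q (g x) < y} \<in> sets N"
    proof -
      have "(\<lambda>r. {x\<in>space N. ennreal (real_of_rat r) < y} \<inter> {x\<in>space N. AE t in lborel. g x t \<le> ennreal (real_of_rat r)}) ` UNIV \<subseteq> sets N"
        using Sm by (auto intro!: sets.Int sets.sets_Collect_const)
      then show ?thesis unfolding eq by (rule sets.countable_UN'[OF countableI_type])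
    qed
  qed
qed


abbreviation PP :: "(nat \<Rightarrow> real) measure" where "PP \<equiv> PiM UNIV (\<lambda>_. lborel)"

lemma upd_measurable: "(\<lambda>z. (fst z)(k := snd z)) \<in> measurable (PP \<Otimes>\<^sub>M lborel) PP"
proof -
  have eq: "(\<lambda>z i. (\<lambda>i z. if i = k then snd z else fst z i) i z) = (\<lambda>z. (fst z)(k := snd z))"
    by (auto simp: fun_eq_iff)
  show ?thesis unfolding eq[symmetric]
  proof (rule measurable_PiM_single')
    fix i :: nat
    show "(\<lambda>z. if i = k then snd z else fst z i) \<in> measurable (PP \<Otimes>\<^sub>M lborel) lborel"
      by (cases "i = k") simp_all
  qed (simp add: space_PiM)
qed

lemma slice_measurable: "(\<lambda>t. x(k := t)) \<in> measurable lborel PP"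
  using measurable_Pair2[OF upd_measurable, of x k] by (simp add: space_PiM)

lemma sh_measurable: "(\<lambda>x i. if i < n then x i + z i else x i) \<in> measurable PP PP"
proof (rule measurable_PiM_single')
  fix i :: nat
  show "(\<lambda>x. if i < n then x i + z i else x i) \<in> measurable PP lborel"
    by (cases "i < n") simp_all
qed (simp add: space_PiM)

lemma mp_measurable:
  assumes F: "case_prod F \<in> borel_measurable (N \<Otimes>\<^sub>M PP)" and q: "\<forall>i<k. 1 \<le> q i"
  shows "(\<lambda>z. mixed_partial q k (F (fst z)) (snd z)) \<in> borel_measurable (N \<Otimes>\<^sub>M PP)"
  using q
proof (induction k)
  case 0
  have "(\<lambda>z. F (fst z) (snd z)) = case_prod F" by (auto simp: fun_eq_iff)
  then show ?case using F by simp
next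
  case (Suc k)
  then have IH: "(\<lambda>z. mixed_partial q k (F (fst z)) (snd z)) \<in> borel_measurable (N \<Otimes>\<^sub>M PP)"
    by simp
  define g where "g = (\<lambda>z t. mixed_partial q k (F (fst z)) ((snd z)(k := t)))"
  have m1: "(\<lambda>w. (fst (fst w), (snd (fst w))(k := snd w))) \<in> measurable ((N \<Otimes>\<^sub>M PP) \<Otimes>\<^sub>M lborel) (N \<Otimes>\<^sub>M PP)"
  proof (rule measurable_Pair)
    show "(\<lambda>w. fst (fst w)) \<in> measurable ((N \<Otimes>\<^sub>M PP) \<Otimes>\<^sub>M lborel) N" by simp
    have "(\<lambda>w. (snd (fst w), snd w)) \<in> measurable ((N \<Otimes>\<^sub>M PP) \<Otimes>\<^sub>M lborel) (PP \<Otimes>\<^sub>M lborel)"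
      by simp
    from measurable_compose[OF this upd_measurable]
    show "(\<lambda>w. (snd (fst w))(k := snd w)) \<in> measurable ((N \<Otimes>\<^sub>M PP) \<Otimes>\<^sub>M lborel) PP" by simp
  qed
  have "case_prod g = (\<lambda>w. (\<lambda>z. mixed_partial q k (F (fst z)) (snd z)) (fst (fst w), (snd (fst w))(k := snd w)))"
    by (auto simp: fun_eq_iff g_def)
  then have gm: "case_prod g \<in> borel_measurable ((N \<Otimes>\<^sub>M PP) \<Otimes>\<^sub>M lborel)"
    using measurable_compose[OF m1 IH] by simp
  have "(\<lambda>z. Lp1 (q k) (g z)) \<in> borel_measurable (N \<Otimes>\<^sub>M PP)"
    by (rule Lp1_measurable[OF gm]) (use Suc.prems in simp)
  then show ?case unfolding g_def by simp
qed

lemma mp_measurable1: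
  assumes F: "F \<in> borel_measurable PP" and q: "\<forall>i<k. 1 \<le> q i"
  shows "mixed_partial q k F \<in> borel_measurable PP"
proof -
  have "case_prod (\<lambda>a::nat\<Rightarrow>real. F) \<in> borel_measurable (PP \<Otimes>\<^sub>M PP)"
    using measurable_compose[OF measurable_snd F] by (simp add: case_prod_beta')
  from mp_measurable[OF this q] have "(\<lambda>z. mixed_partial q k F (snd z)) \<in> borel_measurable (PP \<Otimes>\<^sub>M PP)"
    by simp
  from measurable_Pair2[OF this, of undefined] show ?thesis by (simp add: space_PiM)
qed

lemma mp_slice:
  assumes F: "F \<in> borel_measurable PP" and q: "\<forall>i<k. 1 \<le> q i"
  shows "(\<lambda>t. mixed_partial q k F (x(j := t))) \<in> borel_measurable lborel"
  using measurable_compose[OF slice_measurable mp_measurable1[OF F q]] by simp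

lemma mp_mono:
  assumes "\<And>x. F x \<le> G x" "\<forall>i<k. 1 \<le> q i"
  shows "mixed_partial q k F x \<le> mixed_partial q k G x"
  using assms(2)
proof (induction k arbitrary: x)
  case 0 then show ?case using assms(1) by simp
next
  case (Suc k)
  then show ?case by (simp add: Lp1_mono)
qed

lemma mp_local:
  assumes "\<forall>i\<ge>k. x i = x' i"
  shows "mixed_partial q k F x = mixed_partial q k F x'"
  using assms
proof (induction k arbitrary: x x')
  case 0 then have "x = x'" by (auto simp: fun_eq_iff)
  then show ?case by simp
next
  case (Suc k)
  have "mixed_partial q k F (x(k := t)) = mixed_partial q k F (x'(k := t))" for t
    using Suc.prems by (intro Suc.IH) auto
  then show ?case by simp
qed

lemma mp_cong:
  assumes "\<forall>w. (\<forall>i\<ge>k. w i = x i) \<longrightarrow> F w = G w"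
  shows "mixed_partial q k F x = mixed_partial q k G x"
  using assms
proof (induction k arbitrary: x)
  case 0 then have "F x = G x" by blast
  then show ?case by simp
next
  case (Suc k)
  have "mixed_partial q k F (x(k := t)) = mixed_partial q k G (x(k := t))" for t
    using Suc.prems by (intro Suc.IH) auto
  then show ?case by simp
qed


lemma Lp1_zero: "Lp1 q (\<lambda>t. 0) = 0"
proof (cases "q = \<infinity>")
  case True
  have "ess_sup_real (\<lambda>t. 0) \<le> 0" by (rule ess_sup_real_le) simp
  then show ?thesis using True by (simp add: Lp1_def)
next
  case False then show ?thesis by (simp add: Lp1_def epow_def)
qed

lemma mp_zero: "mixed_partial q k (\<lambda>x. 0) x = 0"
  by (induction k arbitrary: x) (simp_all add: Lp1_zero)

lemma mp_scale:
  assumes F: "F \<in> borel_measurable PP" and q: "\<forall>i<k. 1 \<le> q i" and c: "0 < c"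
  shows "mixed_partial q k (\<lambda>x. ennreal c * F x) x \<le> ennreal c * mixed_partial q k F x"
  using q
proof (induction k arbitrary: x)
  case 0 then show ?case by simp
next
  case (Suc k)
  have q': "\<forall>i<k. 1 \<le> q i" using Suc.prems by simp
  have "mixed_partial q (Suc k) (\<lambda>x. ennreal c * F x) x
      \<le> Lp1 (q k) (\<lambda>t. ennreal c * mixed_partial q k F (x(k := t)))"
    using Suc.prems by (simp, intro Lp1_mono Suc.IH) auto
  also have "\<dots> \<le> ennreal c * Lp1 (q k) (\<lambda>t. mixed_partial q k F (x(k := t)))"
    using Suc.prems c by (intro Lp1_scale mp_slice[OF F q']) auto
  finally show ?case by simp
qed

lemma mp_add:
  assumes F: "F \<in> borel_measurable PP" and G: "G \<in> borel_measurable PP" and q: "\<forall>i<k. 1 \<le> q i"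
  shows "mixed_partial q k (\<lambda>x. F x + G x) x \<le> ennreal (4 ^ k) * (mixed_partial q k F x + mixed_partial q k G x)"
  using q
proof (induction k arbitrary: x)
  case 0 then show ?case by simp
next
  case (Suc k)
  have q': "\<forall>i<k. 1 \<le> q i" using Suc.prems by simp
  have mF: "(\<lambda>t. mixed_partial q k F (x(k := t))) \<in> borel_measurable lborel" by (rule mp_slice[OF F q'])
  have mG: "(\<lambda>t. mixed_partial q k G (x(k := t))) \<in> borel_measurable lborel" by (rule mp_slice[OF G q'])
  have "mixed_partial q (Suc k) (\<lambda>x. F x + G x) x
      \<le> Lp1 (q k) (\<lambda>t. ennreal (4 ^ k) * (mixed_partial q k F (x(k := t)) + mixed_partial q k G (x(k := t))))"
    using Suc.prems by (simp, intro Lp1_mono Suc.IH) auto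
  also have "\<dots> \<le> ennreal (4 ^ k) * Lp1 (q k) (\<lambda>t. mixed_partial q k F (x(k := t)) + mixed_partial q k G (x(k := t)))"
    using Suc.prems by (intro Lp1_scale borel_measurable_add mF mG) auto
  also have "\<dots> \<le> ennreal (4 ^ k) * (4 * (Lp1 (q k) (\<lambda>t. mixed_partial q k F (x(k := t))) + Lp1 (q k) (\<lambda>t. mixed_partial q k G (x(k := t)))))"
    using Suc.prems by (intro mult_left_mono Lp1_add mF mG) auto
  also have "\<dots> = ennreal (4 ^ Suc k) * (mixed_partial q (Suc k) F x + mixed_partial q (Suc k) G x)"
    by (simp add: ennreal_mult' distrib_left ac_simps)
  finally show ?case .
qed

lemma mp_sum:
  assumes J: "finite J" and F: "\<And>j. F j \<in> borel_measurable PP" and q: "\<forall>i<k. 1 \<le> q i"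
  shows "mixed_partial q k (\<lambda>x. \<Sum>j\<in>J. F j x) x \<le> ennreal ((4 ^ k) ^ card J) * (\<Sum>j\<in>J. mixed_partial q k (F j) x)"
  using J
proof (induction J rule: finite_induct)
  case empty then show ?case by (simp add: mp_zero)
next
  case (insert j J)
  define K :: real where "K = 4 ^ k"
  have K1: "1 \<le> K" unfolding K_def by simp
  have S: "(\<lambda>x. \<Sum>j\<in>J. F j x) \<in> borel_measurable PP" using F by (intro borel_measurable_sum) auto
  have "mixed_partial q k (\<lambda>x. \<Sum>j\<in>insert j J. F j x) x = mixed_partial q k (\<lambda>x. F j x + (\<Sum>j\<in>J. F j x)) x"
    using insert by simp
  also have "\<dots> \<le> ennreal K * (mixed_partial q k (F j) x + mixed_partial q k (\<lambda>x. \<Sum>j\<in>J. F j x) x)"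
    unfolding K_def by (rule mp_add[OF F S q])
  also have "\<dots> \<le> ennreal K * (mixed_partial q k (F j) x + ennreal (K ^ card J) * (\<Sum>j\<in>J. mixed_partial q k (F j) x))"
    using insert.IH by (intro mult_left_mono add_left_mono) (auto simp: K_def)
  also have "\<dots> \<le> ennreal K * (ennreal (K ^ card J) * mixed_partial q k (F j) x + ennreal (K ^ card J) * (\<Sum>j\<in>J. mixed_partial q k (F j) x))"
  proof -
    have "1 \<le> K ^ card J" using K1 by simp
    then have "1 * mixed_partial q k (F j) x \<le> ennreal (K ^ card J) * mixed_partial q k (F j) x"
      by (intro mult_right_mono) (auto simp: ennreal_leI[of 1, simplified])
    then show ?thesis by (intro mult_left_mono add_right_mono) auto
  qed
  also have "\<dots> = ennreal (K ^ card (insert j J)) * (\<Sum>j\<in>insert j J. mixed_partial q k (F j) x)"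
    using insert K1 by (simp add: distrib_left[symmetric] mult.assoc[symmetric] ennreal_mult'[symmetric])
  finally show ?case unfolding K_def .
qed

definition sh :: "nat \<Rightarrow> (nat \<Rightarrow> real) \<Rightarrow> (nat \<Rightarrow> real) \<Rightarrow> (nat \<Rightarrow> real)" where
  "sh n z x = (\<lambda>i. if i < n then x i + z i else x i)"

lemma mp_shift:
  assumes F: "F \<in> borel_measurable PP" and q: "\<forall>i<k. 1 \<le> q i" and k: "k \<le> n"
  shows "mixed_partial q k (\<lambda>x. F (sh n z x)) x = mixed_partial q k F (sh n z x)"
  using q k
proof (induction k arbitrary: x)
  case 0 then show ?case by simp
next
  case (Suc k)
  have q': "\<forall>i<k. 1 \<le> q i" using Suc.prems by simp
  have kn: "k < n" using Suc.prems by simp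
  have e: "sh n z (x(k := t)) = (sh n z x)(k := t + z k)" for t
    using kn by (auto simp: sh_def fun_eq_iff)
  have "mixed_partial q (Suc k) (\<lambda>x. F (sh n z x)) x = Lp1 (q k) (\<lambda>t. mixed_partial q k F ((sh n z x)(k := t + z k)))"
    using Suc by (simp add: e)
  also have "\<dots> = Lp1 (q k) (\<lambda>t. mixed_partial q k F ((sh n z x)(k := t)))"
    using Suc.prems by (intro Lp1_shift mp_slice[OF F q']) auto
  finally show ?case by simp
qed


definition Phi :: "nat \<Rightarrow> ((nat \<Rightarrow> real) \<Rightarrow> real) \<Rightarrow> real \<Rightarrow> (nat \<Rightarrow> real) \<Rightarrow> (nat \<Rightarrow> real) \<Rightarrow> ennreal" where
  "Phi n f r y x = ennreal (\<bar>f (restrict x {..<n})\<bar> * indicator (ball_n n y r) x)"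

definition Gf :: "nat \<Rightarrow> (nat \<Rightarrow> ennreal) \<Rightarrow> ((nat \<Rightarrow> real) \<Rightarrow> real) \<Rightarrow> real \<Rightarrow> (nat \<Rightarrow> real) \<Rightarrow> ennreal" where
  "Gf n p f r y = mixed_partial p n (Phi n f r y) (\<lambda>_. undefined)"

lemma amalgam_eq:
  "amalgam_norm n p s r f = mixed_partial s n (Gf n p f r) (\<lambda>_. undefined)"
proof -
  have "mixed_norm n p (\<lambda>x. f x * indicator (ball_n n y r) x) = Gf n p f r y" for y
    unfolding mixed_norm_def Gf_def
  proof (rule mp_cong, intro allI impI)
    fix w :: "nat \<Rightarrow> real" assume w: "\<forall>i\<ge>n. w i = undefined"
    have "restrict w {..<n} = w" using w by (auto simp: restrict_def fun_eq_iff)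
    then show "ennreal \<bar>f w * indicator (ball_n n y r) w\<bar> = Phi n f r y w"
      by (simp add: Phi_def abs_mult)
  qed
  then show ?thesis unfolding amalgam_norm_def by simp
qed

lemma dist_n_measurable:
  "(\<lambda>z. dist_n n (snd z) (fst z)) \<in> borel_measurable (PP \<Otimes>\<^sub>M PP)"
  unfolding dist_n_def by measurable

lemma Phi_measurable:
  assumes f: "f \<in> borel_measurable (lebesgue_n n)"
  shows "case_prod (Phi n f r) \<in> borel_measurable (PP \<Otimes>\<^sub>M PP)"
proof -
  have f1: "(\<lambda>z. f (restrict (snd z) {..<n})) \<in> borel_measurable (PP \<Otimes>\<^sub>M PP)"
    using measurable_compose[OF measurable_compose[OF measurable_snd measurable_restrict_subset[of "{..<n}" UNIV "\<lambda>_. lborel"]] f]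
    by simp
  have d: "{z \<in> space (PP \<Otimes>\<^sub>M PP). dist_n n (snd z) (fst z) < r} \<in> sets (PP \<Otimes>\<^sub>M PP)"
    using dist_n_measurable by measurable
  have "case_prod (Phi n f r) = (\<lambda>z. ennreal (\<bar>f (restrict (snd z) {..<n})\<bar> * indicator {z \<in> space (PP \<Otimes>\<^sub>M PP). dist_n n (snd z) (fst z) < r} z))"
    by (auto simp: fun_eq_iff Phi_def ball_n_def indicator_def space_pair_measure space_PiM)
  also have "\<dots> \<in> borel_measurable (PP \<Otimes>\<^sub>M PP)"
    by (intro measurable_compose[OF _ measurable_ennreal] borel_measurable_times borel_measurable_abs f1
        borel_measurable_indicator d)
  finally show ?thesis .
qed

lemma Phi_measurable1:
  assumes f: "f \<in> borel_measurable (lebesgue_n n)"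
  shows "Phi n f r y \<in> borel_measurable PP"
  using measurable_Pair2[OF Phi_measurable[OF f], of y] by (simp add: space_PiM)

lemma Gf_measurable:
  assumes f: "f \<in> borel_measurable (lebesgue_n n)" and p: "\<forall>i<n. 1 \<le> p i"
  shows "Gf n p f r \<in> borel_measurable PP"
proof -
  have "(\<lambda>z. mixed_partial p n (Phi n f r (fst z)) (snd z)) \<in> borel_measurable (PP \<Otimes>\<^sub>M PP)"
    by (rule mp_measurable[OF Phi_measurable[OF f] p])
  from measurable_Pair1[OF this, of "\<lambda>_. undefined"] show ?thesis
    by (simp add: space_PiM Gf_def[abs_def])
qed

lemma amalgam_mono:
  assumes "r1 \<le> r2" and p: "\<forall>i<n. 1 \<le> p i" and s: "\<forall>i<n. 1 \<le> s i"
  shows "amalgam_norm n p s r1 f \<le> amalgam_norm n p s r2 f"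
proof -
  have "Phi n f r1 y x \<le> Phi n f r2 y x" for y x
    using assms(1) by (auto simp: Phi_def ball_n_def indicator_def intro!: ennreal_leI)
  then have "Gf n p f r1 y \<le> Gf n p f r2 y" for y
    unfolding Gf_def by (intro mp_mono p)
  then show ?thesis unfolding amalgam_eq by (intro mp_mono s)
qed


lemma covering:
  fixes n :: nat and lam a :: real and x y :: "nat \<Rightarrow> real"
  assumes n: "1 \<le> n" and a: "0 < a" and lam: "0 < lam"
    and xy: "dist_n n x y < lam * a"
  shows "\<exists>m\<in>{m :: nat \<Rightarrow> int. \<forall>i. (i \<in> {..<n} \<longrightarrow> m i \<in> {-(\<lceil>lam * n\<rceil> + 1)..\<lceil>lam * n\<rceil> + 1}) \<and> (i \<notin> {..<n} \<longrightarrow> m i = 0)}.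
           dist_n n x (sh n (\<lambda>i. (a / n) * of_int (m i)) y) < a"
proof -
  define d where "d = a / n"
  have d: "0 < d" using n a by (simp add: d_def)
  define L where "L = \<lceil>lam * n\<rceil> + 1"
  define m where "m i = (if i < n then round ((x i - y i) / d) else 0)" for i
  have coord: "\<bar>x i - y i\<bar> \<le> dist_n n x y" if "i < n" for i
  proof -
    have "(x i - y i)\<^sup>2 \<le> (\<Sum>j<n. (x j - y j)\<^sup>2)" using that by (intro member_le_sum) auto
    then have "sqrt ((x i - y i)\<^sup>2) \<le> sqrt (\<Sum>j<n. (x j - y j)\<^sup>2)" by (rule real_sqrt_le_mono)
    then show ?thesis by (simp add: dist_n_def)
  qed
  have bnd: "\<bar>m i\<bar> \<le> L" if "i < n" for i
  proof -
    define t where "t = (x i - y i) / d"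
    have "\<bar>x i - y i\<bar> < lam * a" using coord[OF that] xy by simp
    then have "\<bar>t\<bar> < lam * a / d" unfolding t_def using d by (simp add: abs_divide divide_strict_right_mono)
    also have "lam * a / d = lam * n" using n a by (simp add: d_def)
    finally have t1: "\<bar>t\<bar> < lam * n" .
    have "\<bar>of_int (round t) - t\<bar> \<le> 1/2" by (rule of_int_round_abs_le)
    then have "\<bar>real_of_int (round t)\<bar> \<le> \<bar>t\<bar> + 1/2" by linarith
    also have "\<dots> \<le> real_of_int L" using t1 unfolding L_def
      using le_of_int_ceiling[of "lam * n"] by linarith
    finally have "real_of_int \<bar>round t\<bar> \<le> real_of_int L" by simp
    then show ?thesis using that by (simp add: m_def t_def)
  qed
  have err: "(x i - (y i + d * of_int (m i)))\<^sup>2 \<le> (d / 2)\<^sup>2" if "i < n" for i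
  proof -
    define t where "t = (x i - y i) / d"
    have "x i - (y i + d * of_int (m i)) = d * (t - of_int (round t))"
      using that d by (simp add: m_def t_def field_simps)
    moreover have "\<bar>t - of_int (round t)\<bar> \<le> 1/2" using of_int_round_abs_le[of t] by linarith
    ultimately have "\<bar>x i - (y i + d * of_int (m i))\<bar> \<le> d / 2"
      using d by (simp add: abs_mult)
    then have "\<bar>x i - (y i + d * of_int (m i))\<bar> \<le> \<bar>d / 2\<bar>" using d by simp
    then show ?thesis by (simp only: abs_le_square_iff)
  qed
  have "(\<Sum>i<n. (x i - sh n (\<lambda>i. d * of_int (m i)) y i)\<^sup>2) \<le> (\<Sum>i<n. (d / 2)\<^sup>2)"
    using err by (intro sum_mono) (simp add: sh_def)
  also have "\<dots> = n * (d / 2)\<^sup>2" by simp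
  also have "\<dots> = a\<^sup>2 / (4 * n)" using n by (simp add: d_def power2_eq_square field_simps)
  also have "\<dots> < a\<^sup>2" using n a by (simp add: field_simps)
  finally have "sqrt (\<Sum>i<n. (x i - sh n (\<lambda>i. d * of_int (m i)) y i)\<^sup>2) < sqrt (a\<^sup>2)"
    by (rule real_sqrt_less_mono)
  then have "dist_n n x (sh n (\<lambda>i. d * of_int (m i)) y) < a" using a by (simp add: dist_n_def)
  moreover have "\<forall>i. (i \<in> {..<n} \<longrightarrow> m i \<in> {-L..L}) \<and> (i \<notin> {..<n} \<longrightarrow> m i = 0)"
  proof (intro allI conjI impI)
    fix i assume i: "i \<in> {..<n}"
    then have "\<bar>m i\<bar> \<le> L" using bnd by simp
    then show "m i \<in> {-L..L}" by (simp add: abs_le_iff)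
  next
    fix i assume "i \<notin> {..<n}" then show "m i = 0" by (simp add: m_def)
  qed
  ultimately show ?thesis unfolding d_def L_def by blast
qed


lemma main_bound:
  fixes n :: nat and p s :: "nat \<Rightarrow> ennreal" and lam :: real
  assumes n: "1 \<le> n" and p: "\<forall>i<n. 1 \<le> p i" and s: "\<forall>i<n. 1 \<le> s i" and lam: "0 < lam"
  shows "\<exists>K::real. 1 \<le> K \<and> (\<forall>f a. f \<in> borel_measurable (lebesgue_n n) \<longrightarrow> 0 < a \<longrightarrow>
           amalgam_norm n p s (lam * a) f \<le> ennreal K * amalgam_norm n p s a f)"
proof -
  define L where "L = \<lceil>lam * n\<rceil> + 1"
  define J where "J = {m :: nat \<Rightarrow> int. \<forall>i. (i \<in> {..<n} \<longrightarrow> m i \<in> {-L..L}) \<and> (i \<notin> {..<n} \<longrightarrow> m i = 0)}"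
  have J: "finite J" unfolding J_def by (rule finite_set_of_finite_funs) auto
  define C :: real where "C = (4 ^ n) ^ card J"
  have C: "0 < C" by (simp add: C_def)
  define K where "K = max 1 (C * C * real (card J))"
  show ?thesis
  proof (intro exI conjI allI impI)
    show "1 \<le> K" by (simp add: K_def)
    fix f :: "(nat \<Rightarrow> real) \<Rightarrow> real" and a :: real
    assume f: "f \<in> borel_measurable (lebesgue_n n)" and a: "0 < a"
    define z where "z m = (\<lambda>i. (a / n) * of_int (m i))" for m :: "nat \<Rightarrow> int"
    define T where "T m = sh n (z m)" for m
    have cov: "Phi n f (lam * a) y x \<le> (\<Sum>m\<in>J. Phi n f a (T m y) x)" for y x
    proof (cases "x \<in> ball_n n y (lam * a)")
      case True
      then obtain m where m: "m \<in> J" "dist_n n x (T m y) < a"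
        using covering[OF n a lam, of x y] by (auto simp: ball_n_def J_def L_def T_def z_def)
      have "Phi n f (lam * a) y x = Phi n f a (T m y) x"
        using True m by (simp add: Phi_def ball_n_def)
      also have "\<dots> \<le> (\<Sum>m\<in>J. Phi n f a (T m y) x)"
        using J m(1) by (intro member_le_sum) auto
      finally show ?thesis .
    next
      case False then show ?thesis by (simp add: Phi_def)
    qed
    have Gb: "Gf n p f (lam * a) y \<le> ennreal C * (\<Sum>m\<in>J. Gf n p f a (T m y))" for y
    proof -
      have "Gf n p f (lam * a) y \<le> mixed_partial p n (\<lambda>x. \<Sum>m\<in>J. Phi n f a (T m y) x) (\<lambda>_. undefined)"
        unfolding Gf_def by (intro mp_mono cov p)
      also have "\<dots> \<le> ennreal C * (\<Sum>m\<in>J. mixed_partial p n (Phi n f a (T m y)) (\<lambda>_. undefined))"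
        unfolding C_def by (rule mp_sum[OF J Phi_measurable1[OF f] p])
      finally show ?thesis by (simp add: Gf_def)
    qed
    have Tm: "T m \<in> measurable PP PP" for m
    proof -
      have "T m = (\<lambda>x i. if i < n then x i + z m i else x i)" by (simp add: T_def sh_def fun_eq_iff)
      then show ?thesis using sh_measurable by simp
    qed
    have GT: "(\<lambda>y. Gf n p f a (T m y)) \<in> borel_measurable PP" for m
      using measurable_compose[OF Tm Gf_measurable[OF f p]] .
    have shift: "mixed_partial s n (\<lambda>y. Gf n p f a (T m y)) (\<lambda>_. undefined) = amalgam_norm n p s a f" for m
    proof -
      have "mixed_partial s n (\<lambda>y. Gf n p f a (T m y)) (\<lambda>_. undefined) = mixed_partial s n (Gf n p f a) (T m (\<lambda>_. undefined))"
        unfolding T_def by (rule mp_shift[OF Gf_measurable[OF f p] s]) simp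
      also have "\<dots> = mixed_partial s n (Gf n p f a) (\<lambda>_. undefined)"
        by (rule mp_local) (simp add: T_def sh_def)
      finally show ?thesis by (simp add: amalgam_eq)
    qed
    have "amalgam_norm n p s (lam * a) f = mixed_partial s n (Gf n p f (lam * a)) (\<lambda>_. undefined)"
      by (rule amalgam_eq)
    also have "\<dots> \<le> mixed_partial s n (\<lambda>y. ennreal C * (\<Sum>m\<in>J. Gf n p f a (T m y))) (\<lambda>_. undefined)"
      by (intro mp_mono Gb s)
    also have "\<dots> \<le> ennreal C * mixed_partial s n (\<lambda>y. \<Sum>m\<in>J. Gf n p f a (T m y)) (\<lambda>_. undefined)"
      by (intro mp_scale s C borel_measurable_sum GT)
    also have "\<dots> \<le> ennreal C * (ennreal C * (\<Sum>m\<in>J. mixed_partial s n (\<lambda>y. Gf n p f a (T m y)) (\<lambda>_. undefined)))"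
      unfolding C_def by (intro mult_left_mono mp_sum[OF J GT s]) simp
    also have "\<dots> = ennreal C * (ennreal C * (\<Sum>m\<in>J. amalgam_norm n p s a f))"
      by (simp add: shift)
    also have "\<dots> = ennreal (C * C * real (card J)) * amalgam_norm n p s a f"
      using C by (simp add: ennreal_mult' ennreal_of_nat_eq_real_of_nat mult.assoc)
    also have "\<dots> \<le> ennreal K * amalgam_norm n p s a f"
      by (intro mult_right_mono ennreal_leI) (auto simp: K_def)
    finally show "amalgam_norm n p s (lam * a) f \<le> ennreal K * amalgam_norm n p s a f" .
  qed
qed

theorem lemma3p1:
  fixes n :: nat and p s :: "nat \<Rightarrow> ennreal" and \<alpha> :: ennreal and \<rho> :: real
  assumes "n \<ge> 1"
    and "\<forall>i<n. 1 \<le> p i" and "\<forall>i<n. 1 \<le> s i" and "1 \<le> \<alpha>"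
    and "(\<Sum>i<n. 1 / s i) / of_nat n \<le> 1 / \<alpha>"
    and "1 / \<alpha> \<le> (\<Sum>i<n. 1 / p i) / of_nat n"
    and "0 < \<rho>"
  shows "\<exists>c C :: real. 0 < c \<and> c \<le> C \<and>
    (\<forall>f r. locally_integrable_n n f \<longrightarrow> 0 < r \<longrightarrow>
       ennreal c * amalgam_norm n p s (\<rho> * r) f \<le> amalgam_norm n p s r f \<and>
       amalgam_norm n p s r f \<le> ennreal C * amalgam_norm n p s (\<rho> * r) f)"
proof (cases "1 \<le> \<rho>")
  case True
  obtain K where K: "1 \<le> K" and KB: "\<And>f a. f \<in> borel_measurable (lebesgue_n n) \<Longrightarrow> 0 < a \<Longrightarrow>
      amalgam_norm n p s (\<rho> * a) f \<le> ennreal K * amalgam_norm n p s a f"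
    using main_bound[OF assms(1,2,3,7)] by blast
  show ?thesis
  proof (rule exI[of _ "1 / K"], rule exI[of _ 1], intro conjI allI impI)
    show "0 < 1 / K" using K by simp
    show "1 / K \<le> 1" using K by simp
    fix f :: "(nat \<Rightarrow> real) \<Rightarrow> real" and r :: real assume li: "locally_integrable_n n f" and r: "0 < r"
    then have f: "f \<in> borel_measurable (lebesgue_n n)" by (simp add: locally_integrable_n_def)
    have "ennreal (1 / K) * amalgam_norm n p s (\<rho> * r) f \<le> ennreal (1 / K) * (ennreal K * amalgam_norm n p s r f)"
      by (intro mult_left_mono KB f r) simp
    also have "\<dots> = amalgam_norm n p s r f"
    proof -
      have "ennreal (1 / K * K) = ennreal (1 / K) * ennreal K" by (rule ennreal_mult') (use K in simp)
      then have "ennreal (1 / K) * ennreal K = ennreal (1 / K * K)" by (rule sym)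
      also have "1 / K * K = 1" using K by simp
      finally have "ennreal (1 / K) * ennreal K = 1" by simp
      then show ?thesis by (simp add: mult.assoc[symmetric])
    qed
    finally show "ennreal (1 / K) * amalgam_norm n p s (\<rho> * r) f \<le> amalgam_norm n p s r f" .
    have "r \<le> \<rho> * r" using True r by simp
    then have "amalgam_norm n p s r f \<le> amalgam_norm n p s (\<rho> * r) f"
      by (rule amalgam_mono) (use assms in auto)
    then show "amalgam_norm n p s r f \<le> ennreal 1 * amalgam_norm n p s (\<rho> * r) f" by simp
  qed
next
  case False
  have lam: "0 < 1 / \<rho>" using assms(7) by simp
  obtain K where K: "1 \<le> K" and KB: "\<And>f a. f \<in> borel_measurable (lebesgue_n n) \<Longrightarrow> 0 < a \<Longrightarrow>
      amalgam_norm n p s (1 / \<rho> * a) f \<le> ennreal K * amalgam_norm n p s a f"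
    using main_bound[OF assms(1,2,3) lam] by blast
  show ?thesis
  proof (rule exI[of _ 1], rule exI[of _ K], intro conjI allI impI)
    show "(0::real) < 1" by simp
    show "1 \<le> K" by (rule K)
    fix f :: "(nat \<Rightarrow> real) \<Rightarrow> real" and r :: real assume li: "locally_integrable_n n f" and r: "0 < r"
    then have f: "f \<in> borel_measurable (lebesgue_n n)" by (simp add: locally_integrable_n_def)
    have "\<rho> * r \<le> r" using False r by simp
    then have "amalgam_norm n p s (\<rho> * r) f \<le> amalgam_norm n p s r f"
      by (rule amalgam_mono) (use assms in auto)
    then show "ennreal 1 * amalgam_norm n p s (\<rho> * r) f \<le> amalgam_norm n p s r f" by simp
    have "0 < \<rho> * r" using assms(7) r by simp
    from KB[OF f this] show "amalgam_norm n p s r f \<le> ennreal K * amalgam_norm n p s (\<rho> * r) f"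
      using assms(7) by simp
  qed
qed

end
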